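(* Assume $W_c$ satisfies Assumption 1, let $r>0$, and suppose $rH^{W_s}(M)+H^{W_c}(X|Z)<R$. Then \[ \liminf_{n\to\infty}-\frac1n\log P_j(\lfloor rn\rfloor,n)\ge\sup_{s\in(0,1)}\big[sR-U[W_s,W_c,\downarrow;r](s)\big]. \]
   Context: Setup. $\mathcal M$ finite, $W_s$ an irreducible aperiodic transition matrix on $\mathcal M$; message $M^k$ with law $P_{M_1}(m_1)\prod_{i=2}^kW_s(m_i|m_{i-1})$. $\mathcal X$ a finite abelian group, $\mathcal Z$ finite, $W_c=\{W_c(x,z|x',z')\}$ an irreducible aperiodic transition matrix on $\mathcal X\times\mathcal Z$; noise $(X^n,Z^n)$ with law $P_{X_1Z_1}(x_1,z_1)\prod_{i=2}^nW_c(x_i,z_i|x_{i-1},z_{i-1})$. Channel: input $\tilde x^n$ yields output $(x^n,z^n)$ with probability $P_{X^nZ^n}(x^n-\tilde x^n,z^n)$. $P_j(k,n)$ is the minimum over codes $(\mathsf e:\mathcal M^k\to\mathcal X^n,\ \mathsf d:(\mathcal X\times\mathcal Z)^n\to\mathcal M^k)$ of the average decoding error probability. $R:=\log|\mathcal X|$. Assumption 1: $\sum_xW_c(x,z|x',z')$ does not depend on $x'$; call it $W_{c,Z}(z|z')$. Entrywise powers $a^t$ of transition probabilities are $0$ when $a=0$; $\lambda(A)$ denotes the Perron–Frobenius eigenvalue. $\theta H^{W_s}_{1-\theta}(M):=\log\lambda\big(W_s(m|m')^{1-\theta}\big)$, $\theta H^{W_c,\downarrow}_{1-\theta}(X|Z):=\log\lambda\big(W_c(x,z|x',z')^{1-\theta}W_{c,Z}(z|z')^{\theta}\big)$;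 $H^{W_s}(M):=\lim_{\theta\to0}H^{W_s}_{1-\theta}(M)$, $H^{W_c}(X|Z):=\lim_{\theta\to0}H^{W_c,\downarrow}_{1-\theta}(X|Z)$. $U[W_s,W_c,\downarrow;r](\theta):=r\theta H^{W_s}_{1-\theta}(M)+\theta H^{W_c,\downarrow}_{1-\theta}(X|Z)$. *)

theory Defs
  imports "HOL-Analysis.Analysis"
begin

text \<open>A transition matrix on a finite type is a function W with W a b = W(a|b),
  i.e. the probability of moving to a from b.\<close>

definition stochastic :: "('a::finite \<Rightarrow> 'a \<Rightarrow> real) \<Rightarrow> bool" where
  "stochastic W \<longleftrightarrow> (\<forall>a b. 0 \<le> W a b) \<and> (\<forall>b. (\<Sum>a\<in>UNIV. W a b) = 1)"

definition prob_dist :: "('a::finite \<Rightarrow> real) \<Rightarrow> bool" where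
  "prob_dist P \<longleftrightarrow> (\<forall>a. 0 \<le> P a) \<and> (\<Sum>a\<in>UNIV. P a) = 1"

fun mat_pow :: "nat \<Rightarrow> ('a::finite \<Rightarrow> 'a \<Rightarrow> real) \<Rightarrow> 'a \<Rightarrow> 'a \<Rightarrow> real" where
  "mat_pow 0 W = (\<lambda>a b. if a = b then 1 else 0)"
| "mat_pow (Suc n) W = (\<lambda>a b. \<Sum>c\<in>UNIV. W a c * mat_pow n W c b)"

definition irreducible_chain :: "('a::finite \<Rightarrow> 'a \<Rightarrow> real) \<Rightarrow> bool" where
  "irreducible_chain W \<longleftrightarrow> (\<forall>a b. \<exists>n>0. mat_pow n W a b > 0)"

definition aperiodic_chain :: "('a::finite \<Rightarrow> 'a \<Rightarrow> real) \<Rightarrow> bool" where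
  "aperiodic_chain W \<longleftrightarrow> (\<forall>a. Gcd {n::nat. n > 0 \<and> mat_pow n W a a > 0} = 1)"

definition mat_eigenvalues :: "('a::finite \<Rightarrow> 'a \<Rightarrow> real) \<Rightarrow> complex set" where
  "mat_eigenvalues A = {\<mu>. \<exists>v::'a \<Rightarrow> complex. (\<exists>b. v b \<noteq> 0) \<and>
      (\<forall>a. (\<Sum>b\<in>UNIV. complex_of_real (A a b) * v b) = \<mu> * v a)}"

text \<open>Perron--Frobenius eigenvalue of a nonnegative matrix = its spectral radius.\<close>
definition pf_eigenvalue :: "('a::finite \<Rightarrow> 'a \<Rightarrow> real) \<Rightarrow> real" where
  "pf_eigenvalue A = Max (cmod ` mat_eigenvalues A)"

text \<open>Entrywise powers: Isabelle's powr already satisfies 0 powr t = 0.\<close>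

definition theta_H_src :: "('m::finite \<Rightarrow> 'm \<Rightarrow> real) \<Rightarrow> real \<Rightarrow> real" where
  "theta_H_src Ws \<theta> = ln (pf_eigenvalue (\<lambda>m m'. Ws m m' powr (1 - \<theta>)))"

definition WcZ :: "('x::{finite,zero} \<times> 'z::finite \<Rightarrow> 'x \<times> 'z \<Rightarrow> real) \<Rightarrow> 'z \<Rightarrow> 'z \<Rightarrow> real" where
  "WcZ Wc z z' = (\<Sum>x\<in>UNIV. Wc (x, z) (0, z'))"

definition assumption1 :: "('x::finite \<times> 'z::finite \<Rightarrow> 'x \<times> 'z \<Rightarrow> real) \<Rightarrow> bool" where
  "assumption1 Wc \<longleftrightarrow> (\<forall>z z' x1 x2. (\<Sum>x\<in>UNIV. Wc (x, z) (x1, z')) = (\<Sum>x\<in>UNIV. Wc (x, z) (x2, z')))"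

definition theta_H_ch :: "('x::{finite,zero} \<times> 'z::finite \<Rightarrow> 'x \<times> 'z \<Rightarrow> real) \<Rightarrow> real \<Rightarrow> real" where
  "theta_H_ch Wc \<theta> = ln (pf_eigenvalue
      (\<lambda>(x, z) (x', z'). Wc (x, z) (x', z') powr (1 - \<theta>) * WcZ Wc z z' powr \<theta>))"

definition H_src :: "('m::finite \<Rightarrow> 'm \<Rightarrow> real) \<Rightarrow> real" where
  "H_src Ws = Lim (at 0) (\<lambda>\<theta>. theta_H_src Ws \<theta> / \<theta>)"

definition H_ch :: "('x::{finite,zero} \<times> 'z::finite \<Rightarrow> 'x \<times> 'z \<Rightarrow> real) \<Rightarrow> real" where
  "H_ch Wc = Lim (at 0) (\<lambda>\<theta>. theta_H_ch Wc \<theta> / \<theta>)"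

definition U_fun :: "('m::finite \<Rightarrow> 'm \<Rightarrow> real) \<Rightarrow> ('x::{finite,zero} \<times> 'z::finite \<Rightarrow> 'x \<times> 'z \<Rightarrow> real)
    \<Rightarrow> real \<Rightarrow> real \<Rightarrow> real" where
  "U_fun Ws Wc r \<theta> = r * theta_H_src Ws \<theta> + theta_H_ch Wc \<theta>"

fun chain_prob :: "('a \<Rightarrow> 'a \<Rightarrow> real) \<Rightarrow> 'a \<Rightarrow> 'a list \<Rightarrow> real" where
  "chain_prob W prev [] = 1"
| "chain_prob W prev (a # as) = W a prev * chain_prob W a as"

fun markov_prob :: "('a \<Rightarrow> real) \<Rightarrow> ('a \<Rightarrow> 'a \<Rightarrow> real) \<Rightarrow> 'a list \<Rightarrow> real" where
  "markov_prob P1 W [] = 1"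
| "markov_prob P1 W (a # as) = P1 a * chain_prob W a as"

text \<open>Additive noise channel: input xt, output (x^n, z^n) with prob P_{XZ}(x^n - xt, z^n).\<close>
definition channel_prob :: "('x::ab_group_add \<times> 'z \<Rightarrow> real) \<Rightarrow> ('x \<times> 'z \<Rightarrow> 'x \<times> 'z \<Rightarrow> real)
    \<Rightarrow> 'x list \<Rightarrow> ('x \<times> 'z) list \<Rightarrow> real" where
  "channel_prob PXZ1 Wc xt ys = markov_prob PXZ1 Wc (map (\<lambda>((x, z), xi). (x - xi, z)) (zip ys xt))"

definition error_prob ::
  "('m \<Rightarrow> real) \<Rightarrow> ('m \<Rightarrow> 'm \<Rightarrow> real) \<Rightarrow> ('x::ab_group_add \<times> 'z \<Rightarrow> real) \<Rightarrow> ('x \<times> 'z \<Rightarrow> 'x \<times> 'z \<Rightarrow> real)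
    \<Rightarrow> nat \<Rightarrow> nat \<Rightarrow> ('m list \<Rightarrow> 'x list) \<Rightarrow> (('x \<times> 'z) list \<Rightarrow> 'm list) \<Rightarrow> real" where
  "error_prob PM1 Ws PXZ1 Wc k n e d =
     (\<Sum>ms\<in>{ms. length ms = k}. markov_prob PM1 Ws ms *
        (\<Sum>ys\<in>{ys. length ys = n}. channel_prob PXZ1 Wc (e ms) ys * (if d ys = ms then 0 else 1)))"

definition valid_encoder :: "nat \<Rightarrow> nat \<Rightarrow> ('m list \<Rightarrow> 'x list) \<Rightarrow> bool" where
  "valid_encoder k n e \<longleftrightarrow> (\<forall>ms. length ms = k \<longrightarrow> length (e ms) = n)"

definition Pj ::
  "('m::finite \<Rightarrow> real) \<Rightarrow> ('m \<Rightarrow> 'm \<Rightarrow> real) \<Rightarrow> ('x::{finite,ab_group_add} \<times> 'z::finite \<Rightarrow> real)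
    \<Rightarrow> ('x \<times> 'z \<Rightarrow> 'x \<times> 'z \<Rightarrow> real) \<Rightarrow> nat \<Rightarrow> nat \<Rightarrow> real" where
  "Pj PM1 Ws PXZ1 Wc k n =
     Inf {error_prob PM1 Ws PXZ1 Wc k n e d | e d. valid_encoder k n e}"

definition neg_log_rate :: "real \<Rightarrow> nat \<Rightarrow> ereal" where
  "neg_log_rate p n = (if p = 0 then \<infinity> else ereal (- ln p / real n))"

end

theory Submission
  imports Defs "Jordan_Normal_Form.Spectral_Radius" "HOL-Real_Asymp.Real_Asymp"
begin


lemma mat_pow_Suc':
  "mat_pow (Suc n) W a b = (\<Sum>c\<in>UNIV. mat_pow n W a c * W c b)"
proof (induction n arbitrary: a b)
  case 0
  have "(\<Sum>c\<in>UNIV. W a c * (if c = b then 1 else 0)) = (\<Sum>c\<in>UNIV. if c = b then W a c else 0)"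
    by (intro sum.cong) auto
  moreover have "(\<Sum>c\<in>UNIV. (if a = c then 1 else 0) * W c b) = (\<Sum>c\<in>UNIV. if a = c then W c b else 0)"
    by (intro sum.cong) auto
  ultimately show ?case by simp
next
  case (Suc n)
  have "mat_pow (Suc (Suc n)) W a b = (\<Sum>c\<in>UNIV. W a c * mat_pow (Suc n) W c b)"
    by (simp only: mat_pow.simps(2)[of "Suc n"])
  also have "\<dots> = (\<Sum>c\<in>UNIV. W a c * (\<Sum>d\<in>UNIV. mat_pow n W c d * W d b))"
    by (simp only: Suc.IH)
  also have "\<dots> = (\<Sum>c\<in>UNIV. \<Sum>d\<in>UNIV. W a c * mat_pow n W c d * W d b)"
    by (simp add: sum_distrib_left mult.assoc)
  also have "\<dots> = (\<Sum>d\<in>UNIV. \<Sum>c\<in>UNIV. W a c * mat_pow n W c d * W d b)"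
    by (rule sum.swap)
  also have "\<dots> = (\<Sum>d\<in>UNIV. (\<Sum>c\<in>UNIV. W a c * mat_pow n W c d) * W d b)"
    by (simp add: sum_distrib_right)
  finally show ?case by (simp only: mat_pow.simps(2)[of n])
qed

definition conv :: "(nat \<Rightarrow> 'a::finite) \<Rightarrow> ('a \<Rightarrow> 'a \<Rightarrow> real) \<Rightarrow> complex mat" where
  "conv g A = mat CARD('a) CARD('a) (\<lambda>(i,j). complex_of_real (A (g i) (g j)))"

lemma conv_carrier: "conv g A \<in> carrier_mat CARD('a) CARD('a)"
  for A :: "'a::finite \<Rightarrow> 'a \<Rightarrow> real"
  by (simp add: conv_def)

lemma sum_reindex_g:
  assumes g: "bij_betw g {..<CARD('a)} (UNIV::'a::finite set)"
  shows "(\<Sum>j<CARD('a). f (g j)) = (\<Sum>b\<in>UNIV. f b)"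
  using sum.reindex_bij_betw[OF g] by simp

lemma conv_pow:
  fixes A :: "'a::finite \<Rightarrow> 'a \<Rightarrow> real"
  assumes g: "bij_betw g {..<CARD('a)} (UNIV::'a set)"
  shows "i < CARD('a) \<Longrightarrow> j < CARD('a) \<Longrightarrow>
    (conv g A ^\<^sub>m k) $$ (i,j) = complex_of_real (mat_pow k A (g i) (g j))"
proof (induction k arbitrary: i j)
  case 0
  have inj: "inj_on g {..<CARD('a)}" using g bij_betw_def by blast
  from 0 show ?case
    using inj_onD[OF inj, of i j] by (auto simp: conv_def)
next
  case (Suc k)
  have "(conv g A ^\<^sub>m Suc k) $$ (i,j) = (\<Sum>l<CARD('a). (conv g A ^\<^sub>m k) $$ (i,l) * conv g A $$ (l,j))"
    using Suc.prems by (simp add: conv_def scalar_prod_def times_mat_def atLeast0LessThan)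
  also have "\<dots> = (\<Sum>l<CARD('a). complex_of_real (mat_pow k A (g i) (g l) * A (g l) (g j)))"
    using Suc by (intro sum.cong) (auto simp: conv_def)
  also have "\<dots> = (\<Sum>c\<in>UNIV. complex_of_real (mat_pow k A (g i) c * A c (g j)))"
    by (rule sum_reindex_g[OF g])
  also have "\<dots> = complex_of_real (mat_pow (Suc k) A (g i) (g j))"
    by (simp only: mat_pow_Suc' of_real_sum of_real_mult)
  finally show ?case .
qed

lemma conv_mult_vec:
  fixes A :: "'a::finite \<Rightarrow> 'a \<Rightarrow> real"
  assumes g: "bij_betw g {..<CARD('a)} (UNIV::'a set)"
    and w: "w \<in> carrier_vec CARD('a)" and i: "i < CARD('a)"
  shows "(conv g A *\<^sub>v w) $ i = (\<Sum>j<CARD('a). complex_of_real (A (g i) (g j)) * w $ j)"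
  using w i by (simp add: conv_def mult_mat_vec_def scalar_prod_def atLeast0LessThan)

lemma eig_conv:
  fixes A :: "'a::finite \<Rightarrow> 'a \<Rightarrow> real"
  assumes g: "bij_betw g {..<CARD('a)} (UNIV::'a set)"
  shows "mat_eigenvalues A = spectrum (conv g A)"
proof -
  let ?N = "CARD('a)"
  define h where "h = inv_into {..<?N} g"
  have gh: "g (h a) = a" for a
    using g unfolding h_def by (meson UNIV_I bij_betw_inv_into_right)
  have hN: "h a < ?N" for a
    using g unfolding h_def by (metis UNIV_I bij_betw_def inv_into_into lessThan_iff)
  have hg: "i < ?N \<Longrightarrow> h (g i) = i" for i
    using g unfolding h_def by (simp add: bij_betw_inv_into_left)
  show ?thesis
  proof (rule Set.set_eqI, rule iffI)
    fix \<mu> assume "\<mu> \<in> mat_eigenvalues A"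
    then obtain v where v0: "\<exists>b. v b \<noteq> 0"
      and ev: "\<And>a. (\<Sum>b\<in>UNIV. complex_of_real (A a b) * v b) = \<mu> * v a"
      unfolding mat_eigenvalues_def by blast
    define w where "w = vec ?N (\<lambda>i. v (g i))"
    have wc: "w \<in> carrier_vec ?N" by (simp add: w_def)
    from v0 obtain b where "v b \<noteq> 0" by blast
    hence "w $ h b \<noteq> 0" using hN[of b] gh[of b] by (simp add: w_def)
    hence w0: "w \<noteq> 0\<^sub>v ?N" using hN[of b] by auto
    have "conv g A *\<^sub>v w = \<mu> \<cdot>\<^sub>v w"
    proof (rule eq_vecI)
      fix i assume i: "i < dim_vec (\<mu> \<cdot>\<^sub>v w)"
      hence i': "i < ?N" by (simp add: w_def)
      have "(conv g A *\<^sub>v w) $ i = (\<Sum>j<?N. complex_of_real (A (g i) (g j)) * v (g j))"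
        using conv_mult_vec[OF g wc i'] by (simp add: w_def)
      also have "\<dots> = (\<Sum>b\<in>UNIV. complex_of_real (A (g i) b) * v b)"
        by (rule sum_reindex_g[OF g])
      also have "\<dots> = (\<mu> \<cdot>\<^sub>v w) $ i" using ev i' by (simp add: w_def)
      finally show "(conv g A *\<^sub>v w) $ i = (\<mu> \<cdot>\<^sub>v w) $ i" .
    qed (simp add: conv_def w_def)
    thus "\<mu> \<in> spectrum (conv g A)"
      using wc w0 unfolding spectrum_def eigenvalue_def eigenvector_def
      by (auto simp: conv_def)
  next
    fix \<mu> assume "\<mu> \<in> spectrum (conv g A)"
    then obtain w where wc: "w \<in> carrier_vec ?N" and w0: "w \<noteq> 0\<^sub>v ?N"
      and ev: "conv g A *\<^sub>v w = \<mu> \<cdot>\<^sub>v w"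
      unfolding spectrum_def eigenvalue_def eigenvector_def by (auto simp: conv_def)
    define v where "v a = w $ h a" for a
    have "\<exists>i<?N. w $ i \<noteq> 0"
    proof (rule ccontr)
      assume "\<not> (\<exists>i<?N. w $ i \<noteq> 0)"
      hence "w = 0\<^sub>v ?N" using wc by (intro eq_vecI) auto
      with w0 show False by simp
    qed
    then obtain i where i: "i < ?N" "w $ i \<noteq> 0" by blast
    hence v0: "v (g i) \<noteq> 0" using hg by (simp add: v_def)
    have "(\<Sum>b\<in>UNIV. complex_of_real (A a b) * v b) = \<mu> * v a" for a
    proof -
      have "(\<Sum>b\<in>UNIV. complex_of_real (A a b) * v b) = (\<Sum>j<?N. complex_of_real (A a (g j)) * v (g j))"
        by (rule sum_reindex_g[OF g, symmetric])
      also have "\<dots> = (\<Sum>j<?N. complex_of_real (A (g (h a)) (g j)) * w $ j)"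
        using hg by (intro sum.cong) (auto simp: v_def gh)
      also have "\<dots> = (conv g A *\<^sub>v w) $ h a"
        using conv_mult_vec[OF g wc hN[of a]] by simp
      also have "\<dots> = \<mu> * v a" using ev wc hN[of a] by (simp add: v_def)
      finally show ?thesis .
    qed
    thus "\<mu> \<in> mat_eigenvalues A" unfolding mat_eigenvalues_def using v0 by blast
  qed
qed

lemma pf_conv:
  fixes A :: "'a::finite \<Rightarrow> 'a \<Rightarrow> real"
  assumes g: "bij_betw g {..<CARD('a)} (UNIV::'a set)"
  shows "pf_eigenvalue A = spectral_radius (conv g A)"
  unfolding pf_eigenvalue_def spectral_radius_def eig_conv[OF g] by simp

lemma pf_le1_bound:
  fixes A :: "'a::finite \<Rightarrow> 'a \<Rightarrow> real"
  assumes "pf_eigenvalue A \<le> 1"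
  shows "\<exists>C. \<forall>k a b. \<bar>mat_pow k A a b\<bar> \<le> C * (real k + 1) ^ CARD('a)"
proof -
  obtain g where g: "bij_betw g {..<CARD('a)} (UNIV::'a set)"
    using ex_bij_betw_nat_finite[of "UNIV::'a set"] by (auto simp: atLeast0LessThan)
  have "spectral_radius (conv g A) \<le> 1" using assms pf_conv[OF g] by simp
  from spectral_radius_jnf_norm_bound_le_1_upper_triangular[OF conv_carrier this]
  obtain c1 c2 where cb: "\<And>k. norm_bound (conv g A ^\<^sub>m k) (c1 + c2 * real k ^ (CARD('a) - 1))"
    by blast
  define h where "h = inv_into {..<CARD('a)} g"
  have gh: "g (h a) = a" for a
    using g unfolding h_def by (meson UNIV_I bij_betw_inv_into_right)
  have hN: "h a < CARD('a)" for a
    using g unfolding h_def by (metis UNIV_I bij_betw_def inv_into_into lessThan_iff)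
  show ?thesis
  proof (intro exI allI)
    fix k a b
    have "cmod ((conv g A ^\<^sub>m k) $$ (h a, h b)) \<le> c1 + c2 * real k ^ (CARD('a) - 1)"
      using cb[of k] hN[of a] hN[of b] unfolding norm_bound_def
      by (simp add: conv_def)
    hence 1: "\<bar>mat_pow k A a b\<bar> \<le> c1 + c2 * real k ^ (CARD('a) - 1)"
      using conv_pow[OF g hN hN, where k=k] gh by simp
    have p1: "real k ^ (CARD('a) - 1) \<le> (real k + 1) ^ CARD('a)"
    proof -
      have "real k ^ (CARD('a) - 1) \<le> (real k + 1) ^ (CARD('a) - 1)"
        by (rule power_mono) auto
      also have "\<dots> \<le> (real k + 1) ^ CARD('a)"
        by (rule power_increasing) auto
      finally show ?thesis .
    qed
    have p2: "1 \<le> (real k + 1) ^ CARD('a)" by simp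
    have "c1 + c2 * real k ^ (CARD('a) - 1) \<le> \<bar>c1\<bar> + \<bar>c2\<bar> * real k ^ (CARD('a) - 1)"
      by (intro add_mono mult_right_mono) auto
    also have "\<dots> \<le> \<bar>c1\<bar> * (real k + 1) ^ CARD('a) + \<bar>c2\<bar> * (real k + 1) ^ CARD('a)"
      using p1 p2 by (intro add_mono mult_left_mono) (auto simp: mult_le_cancel_left1)
    finally show "\<bar>mat_pow k A a b\<bar> \<le> (\<bar>c1\<bar> + \<bar>c2\<bar>) * (real k + 1) ^ CARD('a)"
      using 1 by (simp add: algebra_simps)
  qed
qed

lemma eig_fin_ne:
  fixes A :: "'a::finite \<Rightarrow> 'a \<Rightarrow> real"
  shows "finite (mat_eigenvalues A)" "mat_eigenvalues A \<noteq> {}"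
proof -
  obtain g where g: "bij_betw g {..<CARD('a)} (UNIV::'a set)"
    using ex_bij_betw_nat_finite[of "UNIV::'a set"] by (auto simp: atLeast0LessThan)
  show "finite (mat_eigenvalues A)" unfolding eig_conv[OF g]
    by (rule card_finite_spectrum(1)[OF conv_carrier])
  show "mat_eigenvalues A \<noteq> {}" unfolding eig_conv[OF g]
    by (rule spectrum_non_empty[OF conv_carrier]) simp
qed

lemma pf_ge: "\<mu> \<in> mat_eigenvalues A \<Longrightarrow> cmod \<mu> \<le> pf_eigenvalue A"
  unfolding pf_eigenvalue_def using eig_fin_ne[of A] by (intro Max_ge) auto

lemma pf_nonneg: "0 \<le> pf_eigenvalue A"
proof -
  obtain \<mu> where "\<mu> \<in> mat_eigenvalues A" using eig_fin_ne(2)[of A] by blast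
  from pf_ge[OF this] show ?thesis by (meson norm_ge_zero order_trans)
qed

lemma mat_pow_scale:
  fixes A :: "'a::finite \<Rightarrow> 'a \<Rightarrow> real"
  shows "mat_pow k (\<lambda>a b. A a b / t) a b = mat_pow k A a b / t ^ k"
proof (induction k arbitrary: a b)
  case 0 then show ?case by simp
next
  case (Suc k)
  show ?case by (simp add: Suc sum_divide_distrib)
qed

definition tpf :: "('a::finite \<Rightarrow> 'a \<Rightarrow> real) \<Rightarrow> real" where
  "tpf A = (if pf_eigenvalue A > 0 then pf_eigenvalue A else 1)"

lemma tpf_pos: "tpf A > 0" by (simp add: tpf_def)

lemma ln_tpf: "ln (tpf A) = ln (pf_eigenvalue A)"
  using pf_nonneg[of A] by (auto simp: tpf_def)

lemma mat_pow_bound: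
  fixes A :: "'a::finite \<Rightarrow> 'a \<Rightarrow> real"
  shows "\<exists>C. \<forall>k a b. \<bar>mat_pow k A a b\<bar> \<le> C * (real k + 1) ^ CARD('a) * tpf A ^ k"
proof -
  let ?t = "tpf A"
  let ?A2 = "\<lambda>a b. A a b / ?t"
  have tp: "?t > 0" by (rule tpf_pos)
  have tge: "pf_eigenvalue A \<le> ?t" by (auto simp: tpf_def)
  have "pf_eigenvalue ?A2 \<le> 1"
    unfolding pf_eigenvalue_def
  proof (subst Max_le_iff)
    show "finite (cmod ` mat_eigenvalues ?A2)" using eig_fin_ne(1) by blast
    show "cmod ` mat_eigenvalues ?A2 \<noteq> {}" using eig_fin_ne(2) by blast
    show "\<forall>a\<in>cmod ` mat_eigenvalues ?A2. a \<le> 1"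
    proof
      fix x assume "x \<in> cmod ` mat_eigenvalues ?A2"
      then obtain \<mu> where x: "x = cmod \<mu>" and mu: "\<mu> \<in> mat_eigenvalues ?A2" by blast
      from mu obtain v where v0: "\<exists>b. v b \<noteq> 0"
        and ev: "\<And>a. (\<Sum>b\<in>UNIV. complex_of_real (A a b / ?t) * v b) = \<mu> * v a"
        unfolding mat_eigenvalues_def by blast
      have "(\<Sum>b\<in>UNIV. complex_of_real (A a b) * v b) = (\<mu> * of_real ?t) * v a" for a
      proof -
        have "(\<Sum>b\<in>UNIV. complex_of_real (A a b) * v b)
            = of_real ?t * (\<Sum>b\<in>UNIV. complex_of_real (A a b / ?t) * v b)"
          using tp by (simp add: sum_distrib_left field_simps)
        also have "\<dots> = (\<mu> * of_real ?t) * v a" using ev by simp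
        finally show ?thesis .
      qed
      hence "\<mu> * of_real ?t \<in> mat_eigenvalues A"
        unfolding mat_eigenvalues_def using v0 by blast
      from pf_ge[OF this] have "cmod \<mu> * ?t \<le> pf_eigenvalue A" using tp by (simp add: norm_mult)
      hence "cmod \<mu> * ?t \<le> 1 * ?t" using tge by simp
      thus "x \<le> 1" using x tp by (simp only: mult_le_cancel_right_pos)
    qed
  qed
  from pf_le1_bound[OF this] obtain C where
    C: "\<And>k a b. \<bar>mat_pow k ?A2 a b\<bar> \<le> C * (real k + 1) ^ CARD('a)" by blast
  show ?thesis
  proof (intro exI allI)
    fix k a b
    have "\<bar>mat_pow k A a b\<bar> / ?t ^ k \<le> C * (real k + 1) ^ CARD('a)"
      using C[of k a b] tp unfolding mat_pow_scale by (simp add: abs_div)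
    thus "\<bar>mat_pow k A a b\<bar> \<le> C * (real k + 1) ^ CARD('a) * ?t ^ k"
      using tp by (simp add: divide_le_eq)
  qed
qed



lemma lists_Suc_eq: "{xs::'a list. length xs = Suc n} = (\<lambda>(a,xs). a # xs) ` (UNIV \<times> {xs. length xs = n})"
  by (auto simp: length_Suc_conv image_iff)

lemma sum_lists_Suc:
  fixes f :: "'a::finite list \<Rightarrow> 'b::comm_monoid_add"
  shows "(\<Sum>xs\<in>{xs. length xs = Suc n}. f xs) = (\<Sum>a\<in>UNIV. \<Sum>xs\<in>{xs. length xs = n}. f (a # xs))"
proof -
  have inj: "inj_on (\<lambda>(a,xs). a # xs) (UNIV \<times> {xs::'a list. length xs = n})"
    by (auto simp: inj_on_def)
  have "(\<Sum>xs\<in>{xs. length xs = Suc n}. f xs) = (\<Sum>p\<in>UNIV \<times> {xs. length xs = n}. f ((\<lambda>(a,xs). a # xs) p))"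
    unfolding lists_Suc_eq by (rule sum.reindex[OF inj, unfolded comp_def])
  also have "\<dots> = (\<Sum>(a,xs)\<in>UNIV \<times> {xs. length xs = n}. f (a # xs))"
    by (rule sum.cong) auto
  also have "\<dots> = (\<Sum>a\<in>UNIV. \<Sum>xs\<in>{xs. length xs = n}. f (a # xs))"
    by (rule sum.cartesian_product[symmetric])
  finally show ?thesis .
qed

lemma sum_lists_0: "(\<Sum>xs\<in>{xs::'a list. length xs = 0}. f xs) = f []"
  by simp

lemma chain_sum_matpow:
  fixes A :: "'a::finite \<Rightarrow> 'a \<Rightarrow> real"
  shows "(\<Sum>xs\<in>{xs. length xs = n}. chain_prob A p xs) = (\<Sum>b\<in>UNIV. mat_pow n A b p)"
proof (induction n arbitrary: p)
  case 0
  have "(\<Sum>b\<in>UNIV. (if b = p then 1 else 0::real)) = 1" by simp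
  then show ?case by simp
next
  case (Suc n)
  have "(\<Sum>xs\<in>{xs. length xs = Suc n}. chain_prob A p xs)
      = (\<Sum>a\<in>UNIV. A a p * (\<Sum>xs\<in>{xs. length xs = n}. chain_prob A a xs))"
    by (simp add: sum_lists_Suc sum_distrib_left)
  also have "\<dots> = (\<Sum>a\<in>UNIV. \<Sum>b\<in>UNIV. mat_pow n A b a * A a p)"
    by (simp add: Suc sum_distrib_left mult.commute)
  also have "\<dots> = (\<Sum>b\<in>UNIV. \<Sum>a\<in>UNIV. mat_pow n A b a * A a p)"
    by (rule sum.swap)
  also have "\<dots> = (\<Sum>b\<in>UNIV. mat_pow (Suc n) A b p)"
    by (simp only: mat_pow_Suc')
  finally show ?case .
qed

lemma chain_sum_stoch:
  assumes "stochastic W"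
  shows "(\<Sum>xs\<in>{xs. length xs = n}. chain_prob W p xs) = 1"
proof (induction n arbitrary: p)
  case 0 then show ?case by simp
next
  case (Suc n)
  have "(\<Sum>xs\<in>{xs. length xs = Suc n}. chain_prob W p xs)
      = (\<Sum>a\<in>UNIV. W a p * (\<Sum>xs\<in>{xs. length xs = n}. chain_prob W a xs))"
    by (simp add: sum_lists_Suc sum_distrib_left)
  also have "\<dots> = 1" using assms by (simp add: Suc stochastic_def)
  finally show ?case .
qed

lemma markov_sum_prob:
  assumes "prob_dist P1" "stochastic W"
  shows "(\<Sum>xs\<in>{xs. length xs = n}. markov_prob P1 W xs) = 1"
proof (cases n)
  case 0 then show ?thesis by simp
next
  case (Suc m)
  have "(\<Sum>xs\<in>{xs. length xs = n}. markov_prob P1 W xs)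
      = (\<Sum>a\<in>UNIV. P1 a * (\<Sum>xs\<in>{xs. length xs = m}. chain_prob W a xs))"
    by (simp add: Suc sum_lists_Suc sum_distrib_left)
  also have "\<dots> = 1" using assms by (simp add: chain_sum_stoch prob_dist_def)
  finally show ?thesis .
qed

lemma chain_nonneg: "(\<And>a b. 0 \<le> W a b) \<Longrightarrow> 0 \<le> chain_prob W p xs"
  by (induction xs arbitrary: p) auto

lemma markov_nonneg: "(\<And>a. 0 \<le> P1 a) \<Longrightarrow> (\<And>a b. 0 \<le> W a b) \<Longrightarrow> 0 \<le> markov_prob P1 W xs"
  by (cases xs) (auto intro!: mult_nonneg_nonneg chain_nonneg)

lemma chain_powr:
  assumes "\<And>a b. 0 \<le> W a b"
  shows "chain_prob W p xs powr u = chain_prob (\<lambda>a b. W a b powr u) p xs"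
  using assms by (induction xs arbitrary: p) (auto simp: powr_mult chain_nonneg)

lemma markov_powr:
  assumes "\<And>a. 0 \<le> P1 a" "\<And>a b. 0 \<le> W a b"
  shows "markov_prob P1 W xs powr u = markov_prob (\<lambda>a. P1 a powr u) (\<lambda>a b. W a b powr u) xs"
  using assms by (cases xs) (auto simp: powr_mult chain_nonneg chain_powr)

lemma markov_sum_bound:
  fixes A :: "'a::finite \<Rightarrow> 'a \<Rightarrow> real"
  shows "\<exists>D. \<forall>k. (\<Sum>xs\<in>{xs. length xs = k}. markov_prob Q A xs) \<le> D * (real k + 1) ^ CARD('a) * tpf A ^ k"
proof -
  obtain C where C: "\<And>k a b. \<bar>mat_pow k A a b\<bar> \<le> C * (real k + 1) ^ CARD('a) * tpf A ^ k"
    using mat_pow_bound[of A] by blast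
  have tp: "tpf A > 0" by (rule tpf_pos)
  define S where "S = (\<Sum>a\<in>UNIV. \<bar>Q a\<bar>)"
  define D where "D = max 1 (S * real CARD('a) * \<bar>C\<bar> / tpf A)"
  show ?thesis
  proof (intro exI allI)
    fix k
    show "(\<Sum>xs\<in>{xs. length xs = k}. markov_prob Q A xs) \<le> D * (real k + 1) ^ CARD('a) * tpf A ^ k"
    proof (cases k)
      case 0
      then show ?thesis by (simp add: D_def)
    next
      case (Suc m)
      let ?B = "\<bar>C\<bar> * (real k + 1) ^ CARD('a) * tpf A ^ m"
      have mb: "\<bar>mat_pow m A b a\<bar> \<le> ?B" for a b
      proof -
        have "C * (real m + 1) ^ CARD('a) * tpf A ^ m \<le> \<bar>C\<bar> * (real m + 1) ^ CARD('a) * tpf A ^ m"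
          using tp by (intro mult_right_mono) auto
        also have "\<dots> \<le> ?B" using tp Suc
          by (intro mult_right_mono mult_left_mono power_mono) auto
        finally show ?thesis using C[of m b a] by linarith
      qed
      have "(\<Sum>xs\<in>{xs. length xs = k}. markov_prob Q A xs)
          = (\<Sum>a\<in>UNIV. \<Sum>xs\<in>{xs. length xs = m}. Q a * chain_prob A a xs)"
        by (simp add: Suc sum_lists_Suc)
      also have "\<dots> = (\<Sum>a\<in>UNIV. Q a * (\<Sum>b\<in>UNIV. mat_pow m A b a))"
        by (simp add: sum_distrib_left[symmetric] chain_sum_matpow)
      also have "\<dots> \<le> (\<Sum>a\<in>UNIV. \<bar>Q a\<bar> * (real CARD('a) * ?B))"
      proof (rule sum_mono)
        fix a
        have "\<bar>\<Sum>b\<in>UNIV. mat_pow m A b a\<bar> \<le> (\<Sum>b\<in>(UNIV::'a set). ?B)"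
          by (rule order_trans[OF sum_abs sum_mono]) (rule mb)
        also have "\<dots> = real CARD('a) * ?B" by simp
        finally have "\<bar>Q a * (\<Sum>b\<in>UNIV. mat_pow m A b a)\<bar> \<le> \<bar>Q a\<bar> * (real CARD('a) * ?B)"
          by (simp add: abs_mult mult_left_mono)
        thus "Q a * (\<Sum>b\<in>UNIV. mat_pow m A b a) \<le> \<bar>Q a\<bar> * (real CARD('a) * ?B)" by linarith
      qed
      also have "\<dots> = S * (real CARD('a) * ?B)"
        by (simp add: S_def sum_distrib_right)
      also have "\<dots> = (S * real CARD('a) * \<bar>C\<bar> / tpf A) * (real k + 1) ^ CARD('a) * tpf A ^ k"
        using tp unfolding Suc power_Suc by (simp add: field_simps)
      also have "\<dots> \<le> D * (real k + 1) ^ CARD('a) * tpf A ^ k"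
        using tp by (intro mult_right_mono) (auto simp: D_def)
      finally show ?thesis .
    qed
  qed
qed



lemma WcZ_eq:
  assumes "assumption1 Wc"
  shows "(\<Sum>x\<in>UNIV. Wc (x, z) (x0, z0)) = WcZ Wc z z0"
  using assms unfolding assumption1_def WcZ_def by metis

lemma chain_marg:
  fixes Wc :: "'x::{finite,zero} \<times> 'z::finite \<Rightarrow> 'x \<times> 'z \<Rightarrow> real"
  assumes "assumption1 Wc"
  shows "(\<Sum>xs\<in>{xs. length xs = length zs}. chain_prob Wc (x0, z0) (zip xs zs)) = chain_prob (WcZ Wc) z0 zs"
proof (induction zs arbitrary: x0 z0)
  case Nil then show ?case by simp
next
  case (Cons z zs)
  have "(\<Sum>xs\<in>{xs. length xs = length (z # zs)}. chain_prob Wc (x0, z0) (zip xs (z # zs)))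
      = (\<Sum>a\<in>UNIV. \<Sum>xs\<in>{xs. length xs = length zs}. Wc (a, z) (x0, z0) * chain_prob Wc (a, z) (zip xs zs))"
    by (simp add: sum_lists_Suc)
  also have "\<dots> = (\<Sum>a\<in>UNIV. Wc (a, z) (x0, z0) * chain_prob (WcZ Wc) z zs)"
    by (simp add: sum_distrib_left[symmetric] Cons)
  also have "\<dots> = WcZ Wc z z0 * chain_prob (WcZ Wc) z zs"
    by (simp add: sum_distrib_right[symmetric] WcZ_eq[OF assms])
  finally show ?case by simp
qed

definition PZ1 :: "('x::finite \<times> 'z \<Rightarrow> real) \<Rightarrow> 'z \<Rightarrow> real" where
  "PZ1 P z = (\<Sum>x\<in>UNIV. P (x, z))"

lemma markov_marg:
  fixes Wc :: "'x::{finite,zero} \<times> 'z::finite \<Rightarrow> 'x \<times> 'z \<Rightarrow> real"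
  assumes "assumption1 Wc"
  shows "(\<Sum>xs\<in>{xs. length xs = length zs}. markov_prob P Wc (zip xs zs)) = markov_prob (PZ1 P) (WcZ Wc) zs"
proof (cases zs)
  case Nil then show ?thesis by simp
next
  case (Cons z zs')
  have "(\<Sum>xs\<in>{xs. length xs = length zs}. markov_prob P Wc (zip xs zs))
      = (\<Sum>a\<in>UNIV. \<Sum>xs\<in>{xs. length xs = length zs'}. P (a, z) * chain_prob Wc (a, z) (zip xs zs'))"
    by (simp add: Cons sum_lists_Suc)
  also have "\<dots> = (\<Sum>a\<in>UNIV. P (a, z) * chain_prob (WcZ Wc) z zs')"
    by (simp add: sum_distrib_left[symmetric] chain_marg[OF assms])
  also have "\<dots> = markov_prob (PZ1 P) (WcZ Wc) zs"
    by (simp add: Cons PZ1_def sum_distrib_right[symmetric])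
  finally show ?thesis .
qed

definition subn :: "('x::ab_group_add \<times> 'z) list \<Rightarrow> 'x list \<Rightarrow> ('x \<times> 'z) list" where
  "subn ys xt = map (\<lambda>((x, z), xi). (x - xi, z)) (zip ys xt)"

definition addn :: "('x::ab_group_add \<times> 'z) list \<Rightarrow> 'x list \<Rightarrow> ('x \<times> 'z) list" where
  "addn ys xt = map (\<lambda>((x, z), xi). (x + xi, z)) (zip ys xt)"

lemma channel_prob_subn: "channel_prob P W xt ys = markov_prob P W (subn ys xt)"
  by (simp add: channel_prob_def subn_def)

lemma subn_zip: "length ys = length xt \<Longrightarrow>
  subn ys xt = zip (map2 (-) (map fst ys) xt) (map snd ys)"
  by (induction ys xt rule: list_induct2) (auto simp: subn_def)

lemma length_subn[simp]: "length (subn ys xt) = min (length ys) (length xt)"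
  by (simp add: subn_def)
lemma length_addn[simp]: "length (addn ys xt) = min (length ys) (length xt)"
  by (simp add: addn_def)

lemma snd_subn: "length ys = length xt \<Longrightarrow> map snd (subn ys xt) = map snd ys"
  by (induction ys xt rule: list_induct2) (auto simp: subn_def)

lemma subn_addn: "length ys = length xt \<Longrightarrow> subn (addn ys xt) xt = ys"
  by (induction ys xt rule: list_induct2) (auto simp: subn_def addn_def)
lemma addn_subn: "length ys = length xt \<Longrightarrow> addn (subn ys xt) xt = ys"
  by (induction ys xt rule: list_induct2) (auto simp: subn_def addn_def)

lemma sum_shift_ys:
  fixes f :: "('x::ab_group_add \<times> 'z) list \<Rightarrow> real"
  assumes x: "length x = n"
  shows "(\<Sum>ys\<in>{ys. length ys = n}. f (subn ys x)) = (\<Sum>w\<in>{w. length w = n}. f w)"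
proof (rule sum.reindex_bij_betw)
  show "bij_betw (\<lambda>ys. subn ys x) {ys. length ys = n} {w. length w = n}"
    by (rule bij_betw_byWitness[where f'="\<lambda>w. addn w x"]) (auto simp: x subn_addn addn_subn)
qed

lemma map2_minus_inv: "length a = length b \<Longrightarrow> map2 (-) a (map2 (-) a b) = (b :: 'x::ab_group_add list)"
  by (induction a b rule: list_induct2) auto

lemma sum_noise_x:
  fixes Wc :: "'x::{finite,ab_group_add} \<times> 'z::finite \<Rightarrow> 'x \<times> 'z \<Rightarrow> real"
  assumes A1: "assumption1 Wc" and ys: "length ys = n"
  shows "(\<Sum>x'\<in>{x'. length x' = n}. markov_prob P Wc (subn ys x')) = markov_prob (PZ1 P) (WcZ Wc) (map snd ys)"
proof -
  let ?phi = "\<lambda>x'::'x list. map2 (-) (map fst ys) x'"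
  have "(\<Sum>x'\<in>{x'. length x' = n}. markov_prob P Wc (subn ys x'))
      = (\<Sum>x'\<in>{x'. length x' = n}. markov_prob P Wc (zip (?phi x') (map snd ys)))"
    using ys by (intro sum.cong) (auto simp: subn_zip)
  also have "\<dots> = (\<Sum>xs\<in>{xs. length xs = n}. markov_prob P Wc (zip xs (map snd ys)))"
  proof (rule sum.reindex_bij_betw)
    show "bij_betw ?phi {x'::'x list. length x' = n} {xs. length xs = n}"
      by (rule bij_betw_byWitness[where f'="?phi"]) (auto simp: ys map2_minus_inv)
  qed
  also have "\<dots> = markov_prob (PZ1 P) (WcZ Wc) (map snd ys)"
    using markov_marg[OF A1, of P "map snd ys"] ys by simp
  finally show ?thesis .
qed

definition Bmat :: "('x::{finite,zero} \<times> 'z::finite \<Rightarrow> 'x \<times> 'z \<Rightarrow> real) \<Rightarrow> real \<Rightarrow> 'x \<times> 'z \<Rightarrow> 'x \<times> 'z \<Rightarrow> real" where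
  "Bmat Wc s = (\<lambda>(x, z) (x', z'). Wc (x, z) (x', z') powr (1 - s) * WcZ Wc z z' powr s)"

lemma Bmat_apply: "Bmat Wc s a b = Wc a b powr (1 - s) * WcZ Wc (snd a) (snd b) powr s"
  by (cases a, cases b) (simp add: Bmat_def)

lemma chain_prod_powr:
  fixes Wc :: "'x::{finite,zero} \<times> 'z::finite \<Rightarrow> 'x \<times> 'z \<Rightarrow> real"
  assumes nn: "\<And>a b. 0 \<le> Wc a b"
  shows "chain_prob Wc p w powr (1 - s) * chain_prob (WcZ Wc) (snd p) (map snd w) powr s = chain_prob (Bmat Wc s) p w"
proof (induction w arbitrary: p)
  case Nil then show ?case by simp
next
  case (Cons a w)
  have nZ: "0 \<le> WcZ Wc z z'" for z z' unfolding WcZ_def by (simp add: nn sum_nonneg)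
  have nc1: "0 \<le> chain_prob Wc a w" by (rule chain_nonneg[OF nn])
  have nc2: "0 \<le> chain_prob (WcZ Wc) (snd a) (map snd w)" by (rule chain_nonneg[OF nZ])
  have "chain_prob Wc p (a # w) powr (1 - s) * chain_prob (WcZ Wc) (snd p) (map snd (a # w)) powr s
      = (Wc a p powr (1 - s) * WcZ Wc (snd a) (snd p) powr s) *
        (chain_prob Wc a w powr (1 - s) * chain_prob (WcZ Wc) (snd a) (map snd w) powr s)"
    using nn nZ nc1 nc2 by (simp add: powr_mult)
  also have "\<dots> = chain_prob (Bmat Wc s) p (a # w)"
    by (simp only: chain_prob.simps Cons.IH Bmat_apply[of Wc s a p])
  finally show ?case .
qed

lemma markov_prod_powr:
  fixes Wc :: "'x::{finite,zero} \<times> 'z::finite \<Rightarrow> 'x \<times> 'z \<Rightarrow> real"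
  assumes nn: "\<And>a b. 0 \<le> Wc a b" and nP: "\<And>a. 0 \<le> P a"
  shows "markov_prob P Wc w powr (1 - s) * markov_prob (PZ1 P) (WcZ Wc) (map snd w) powr s
       = markov_prob (\<lambda>a. P a powr (1 - s) * PZ1 P (snd a) powr s) (Bmat Wc s) w"
proof (cases w)
  case Nil then show ?thesis by simp
next
  case (Cons a w')
  have nZ: "0 \<le> WcZ Wc z z'" for z z' unfolding WcZ_def by (simp add: nn sum_nonneg)
  have nPZ: "0 \<le> PZ1 P z" for z unfolding PZ1_def by (simp add: nP sum_nonneg)
  have "markov_prob P Wc w powr (1 - s) * markov_prob (PZ1 P) (WcZ Wc) (map snd w) powr s
     = (P a powr (1 - s) * PZ1 P (snd a) powr s) *
       (chain_prob Wc a w' powr (1 - s) * chain_prob (WcZ Wc) (snd a) (map snd w') powr s)"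
    using Cons nP nPZ chain_nonneg[OF nn] chain_nonneg[OF nZ] by (simp add: powr_mult)
  also have "\<dots> = markov_prob (\<lambda>a. P a powr (1 - s) * PZ1 P (snd a) powr s) (Bmat Wc s) w"
    using chain_prod_powr[OF nn, where p=a and w=w' and s=s] Cons by simp
  finally show ?thesis .
qed



lemma sum_PiE_decomp:
  assumes "m \<in> K"
  shows "(\<Sum>e\<in>PiE K B. f e) = (\<Sum>x\<in>B m. \<Sum>e'\<in>PiE (K - {m}) B. f (e'(m := x)))"
proof -
  have K: "K = insert m (K - {m})" using assms by blast
  have "(\<Sum>e\<in>PiE K B. f e) = (\<Sum>e\<in>(\<lambda>(y, g). g(m := y)) ` (B m \<times> PiE (K - {m}) B). f e)"
    by (subst K, subst PiE_insert_eq) simp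
  also have "\<dots> = (\<Sum>p\<in>B m \<times> PiE (K - {m}) B. f ((\<lambda>(y, g). g(m := y)) p))"
    by (rule sum.reindex[OF inj_combinator, unfolded comp_def]) simp
  also have "\<dots> = (\<Sum>(y, g)\<in>B m \<times> PiE (K - {m}) B. f (g(m := y)))"
    by (rule sum.cong) auto
  also have "\<dots> = (\<Sum>x\<in>B m. \<Sum>e'\<in>PiE (K - {m}) B. f (e'(m := x)))"
    by (rule sum.cartesian_product[symmetric])
  finally show ?thesis .
qed

lemma sum_PiE_single:
  assumes "m \<in> K"
  shows "(\<Sum>e\<in>PiE K B. g (e m)) = real (card (PiE (K - {m}) B)) * (\<Sum>x\<in>B m. g x)"
proof -
  have "(\<Sum>e\<in>PiE K B. g (e m)) = (\<Sum>x\<in>B m. \<Sum>e'\<in>PiE (K - {m}) B. g x)"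
    by (subst sum_PiE_decomp[OF assms]) simp
  also have "\<dots> = real (card (PiE (K - {m}) B)) * (\<Sum>x\<in>B m. g x)"
    by (simp add: sum_distrib_left)
  finally show ?thesis .
qed

lemma card_PiE_const: "finite K \<Longrightarrow> card (PiE K (\<lambda>_. X)) = card X ^ card K"
  by (simp add: card_PiE)

lemma avg_min:
  fixes f :: "'a \<Rightarrow> real"
  assumes "finite A" "A \<noteq> {}"
  shows "(\<Sum>a\<in>A. min 1 (f a)) \<le> real (card A) * min 1 ((\<Sum>a\<in>A. f a) / real (card A))"
proof -
  have c: "real (card A) > 0" using assms by (simp add: card_gt_0_iff)
  have 1: "(\<Sum>a\<in>A. min 1 (f a)) \<le> real (card A)"
    using sum_mono[of A "\<lambda>a. min 1 (f a)" "\<lambda>_. 1"] by simp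
  have 2: "(\<Sum>a\<in>A. min 1 (f a)) \<le> (\<Sum>a\<in>A. f a)"
    by (rule sum_mono) simp
  have "real (card A) * min 1 ((\<Sum>a\<in>A. f a) / real (card A)) = min (real (card A)) (\<Sum>a\<in>A. f a)"
    using c by (simp add: min_mult_distrib_left)
  thus ?thesis using 1 2 by simp
qed

lemma exists_le_avg:
  fixes f :: "'a \<Rightarrow> real"
  assumes "finite A" "A \<noteq> {}" "(\<Sum>a\<in>A. f a) \<le> real (card A) * b"
  shows "\<exists>a\<in>A. f a \<le> b"
proof (rule ccontr)
  assume "\<not> ?thesis"
  hence "\<forall>a\<in>A. b < f a" by auto
  hence "(\<Sum>a\<in>A. b) < (\<Sum>a\<in>A. f a)" using assms by (intro sum_strict_mono) auto
  thus False using assms by simp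
qed

lemma min_powr:
  fixes u s :: real
  assumes "0 \<le> u" "0 < s" "s < 1"
  shows "min 1 u \<le> u powr s"
proof (cases "u \<ge> 1")
  case True
  then show ?thesis using ge_one_powr_ge_zero[of u s] assms by simp
next
  case False
  have "u powr 1 \<le> u powr s" using assms False by (intro powr_mono') auto
  then show ?thesis using assms by simp
qed



lemma step5:
  fixes t X PZv Y s :: real
  assumes t0: "0 \<le> t" and X: "X > 0" and PZ: "0 \<le> PZv" and s: "0 < s" "s < 1"
    and Y0: "0 \<le> Y" and cnt: "t > 0 \<Longrightarrow> Y \<le> PZv / (X * t)"
  shows "t * min 1 Y \<le> X powr (-s) * t powr (1 - s) * PZv powr s"
proof (cases "t = 0")
  case True then show ?thesis by simp
next
  case False
  hence tp: "t > 0" using t0 by simp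
  define u where "u = PZv / (X * t)"
  have u0: "0 \<le> u" using PZ X tp by (simp add: u_def)
  have "min 1 Y \<le> min 1 u" using cnt[OF tp] by (simp add: u_def)
  also have "\<dots> \<le> u powr s" by (rule min_powr[OF u0 s])
  finally have "t * min 1 Y \<le> t * u powr s" using tp by (simp add: mult_left_mono)
  also have "t * u powr s = X powr (-s) * t powr (1 - s) * PZv powr s"
  proof -
    have 1: "u powr s = PZv powr s / (X powr s * t powr s)"
      using PZ X tp by (simp add: u_def powr_divide powr_mult)
    have 2: "t powr (1 - s) = t / t powr s" using tp by (simp add: powr_diff)
    have 3: "X powr (-s) = 1 / X powr s" using X by (simp add: powr_minus divide_inverse)
    have "t * u powr s = PZv powr s * (1 / X powr s) * (t / t powr s)"
      unfolding 1 using tp X by (simp add: field_simps)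
    thus ?thesis unfolding 2 3 by simp
  qed
  finally show ?thesis .
qed

lemma count_bound:
  fixes v :: "'a \<Rightarrow> 'b \<Rightarrow> real"
  assumes fin: "finite K" "finite Xs" and sub: "K' \<subseteq> K" and v0: "\<And>a b. 0 \<le> v a b"
    and tp: "t > 0"
  shows "(\<Sum>m'\<in>K'. \<Sum>x'\<in>Xs. (if t \<le> v m' x' then 1 else 0)) \<le> (\<Sum>m'\<in>K. \<Sum>x'\<in>Xs. v m' x') / t"
proof -
  have "(\<Sum>m'\<in>K'. \<Sum>x'\<in>Xs. (if t \<le> v m' x' then 1 else 0)) \<le> (\<Sum>m'\<in>K'. \<Sum>x'\<in>Xs. v m' x' / t)"
    using tp v0 by (intro sum_mono) (auto simp: le_divide_eq)
  also have "\<dots> \<le> (\<Sum>m'\<in>K. \<Sum>x'\<in>Xs. v m' x' / t)"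
    using fin sub tp v0 by (intro sum_mono2) (auto intro!: sum_nonneg)
  also have "\<dots> = (\<Sum>m'\<in>K. \<Sum>x'\<in>Xs. v m' x') / t"
    by (simp add: sum_divide_distrib)
  finally show ?thesis .
qed



lemma per_m_ys:
  fixes tf :: "'x \<Rightarrow> real" and v :: "'m \<Rightarrow> 'x \<Rightarrow> real" and Xn :: "'x set"
  assumes K: "finite K" "m \<in> K" and Xn: "finite Xn" "Xn \<noteq> {}"
    and t0: "\<And>x. 0 \<le> tf x" and PZ: "0 \<le> PZv" and s: "0 < s" "s < 1"
    and cnt: "\<And>x. x \<in> Xn \<Longrightarrow> tf x > 0 \<Longrightarrow>
       (\<Sum>m'\<in>K - {m}. \<Sum>x'\<in>Xn. (if tf x \<le> v m' x' then 1 else 0)) / real (card Xn) \<le> PZv / (real (card Xn) * tf x)"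
  shows "(\<Sum>e\<in>PiE K (\<lambda>_. Xn). tf (e m) * min 1 (\<Sum>m'\<in>K - {m}. (if tf (e m) \<le> v m' (e m') then 1 else 0)))
    \<le> real (card (PiE K (\<lambda>_. Xn))) * (1 / real (card Xn)) *
       (\<Sum>x\<in>Xn. real (card Xn) powr (-s) * tf x powr (1 - s) * PZv powr s)"
proof -
  let ?X = "real (card Xn)"
  let ?E' = "PiE (K - {m}) (\<lambda>_. Xn)"
  define T where "T x e' = (\<Sum>m'\<in>K - {m}. (if tf x \<le> v m' (e' m') then 1 else 0::real))" for x e'
  define Y where "Y x = (\<Sum>m'\<in>K - {m}. \<Sum>x'\<in>Xn. (if tf x \<le> v m' x' then 1 else 0::real)) / ?X" for x
  have Xp: "?X > 0" using Xn by (simp add: card_gt_0_iff)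
  have finE': "finite ?E'" using K Xn by (simp add: finite_PiE)
  have neE': "?E' \<noteq> {}" using Xn by (simp add: PiE_eq_empty_iff)
  have cE: "card (PiE K (\<lambda>_. Xn)) = card Xn * card ?E'"
  proof -
    have "card K = Suc (card (K - {m}))" using card_Suc_Diff1[OF K(1) K(2)] by simp
    thus ?thesis using K by (simp add: card_PiE_const) (metis power_Suc)
  qed
  have cE'p: "real (card ?E') > 0" using finE' neE' by (simp add: card_gt_0_iff)
  have step1: "(\<Sum>e\<in>PiE K (\<lambda>_. Xn). tf (e m) * min 1 (\<Sum>m'\<in>K - {m}. (if tf (e m) \<le> v m' (e m') then 1 else 0)))
      = (\<Sum>x\<in>Xn. \<Sum>e'\<in>?E'. tf x * min 1 (T x e'))"
    unfolding sum_PiE_decomp[OF K(2)] T_def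
    by (intro sum.cong refl arg_cong2[where f="(*)"] arg_cong2[where f=min]) auto
  have sumT: "(\<Sum>e'\<in>?E'. T x e') / real (card ?E') = Y x" for x
  proof (cases "K - {m} = {}")
    case True then show ?thesis unfolding T_def Y_def True by simp
  next
    case False
    have "(\<Sum>e'\<in>?E'. T x e') = (\<Sum>m'\<in>K - {m}. \<Sum>e'\<in>?E'. (if tf x \<le> v m' (e' m') then 1 else 0::real))"
      unfolding T_def by (rule sum.swap)
    also have "\<dots> = (\<Sum>m'\<in>K - {m}. real (card ?E') / ?X * (\<Sum>x'\<in>Xn. (if tf x \<le> v m' x' then 1 else 0)))"
    proof (rule sum.cong[OF refl])
      fix m' assume m': "m' \<in> K - {m}"
      have c: "card ?E' = card Xn * card (PiE (K - {m} - {m'}) (\<lambda>_. Xn))"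
      proof -
        have "card (K - {m}) = Suc (card (K - {m} - {m'}))" using card_Suc_Diff1[of "K - {m}" m'] K m' by simp
        thus ?thesis using K by (simp add: card_PiE_const)
      qed
      show "(\<Sum>e'\<in>?E'. (if tf x \<le> v m' (e' m') then 1 else 0::real))
          = real (card ?E') / ?X * (\<Sum>x'\<in>Xn. (if tf x \<le> v m' x' then 1 else 0))"
        using sum_PiE_single[OF m', where B="\<lambda>_. Xn" and g="\<lambda>y. if tf x \<le> v m' y then 1 else 0"] c Xp
        by simp
    qed
    also have "\<dots> = real (card ?E') * Y x"
      by (simp add: Y_def sum_distrib_left sum_divide_distrib)
    finally show ?thesis using cE'p by simp
  qed
  have per_x: "(\<Sum>e'\<in>?E'. tf x * min 1 (T x e')) \<le> real (card ?E') * (?X powr (-s) * tf x powr (1 - s) * PZv powr s)"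
    if x: "x \<in> Xn" for x
  proof -
    have "(\<Sum>e'\<in>?E'. tf x * min 1 (T x e')) = tf x * (\<Sum>e'\<in>?E'. min 1 (T x e'))"
      by (simp add: sum_distrib_left)
    also have "\<dots> \<le> tf x * (real (card ?E') * min 1 (Y x))"
      using avg_min[OF finE' neE', of "T x"] sumT[of x] t0[of x]
      by (intro mult_left_mono) auto
    also have "\<dots> = real (card ?E') * (tf x * min 1 (Y x))" by simp
    also have "\<dots> \<le> real (card ?E') * (?X powr (-s) * tf x powr (1 - s) * PZv powr s)"
    proof (rule mult_left_mono)
      show "tf x * min 1 (Y x) \<le> ?X powr (-s) * tf x powr (1 - s) * PZv powr s"
      proof (rule step5[OF t0 Xp PZ s])
        show "0 \<le> Y x" unfolding Y_def by (intro divide_nonneg_nonneg sum_nonneg) auto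
        show "tf x > 0 \<Longrightarrow> Y x \<le> PZv / (?X * tf x)" using cnt[OF x] by (simp add: Y_def)
      qed
    qed simp
    finally show ?thesis .
  qed
  have "(\<Sum>x\<in>Xn. \<Sum>e'\<in>?E'. tf x * min 1 (T x e'))
      \<le> (\<Sum>x\<in>Xn. real (card ?E') * (?X powr (-s) * tf x powr (1 - s) * PZv powr s))"
    by (rule sum_mono) (rule per_x)
  also have "\<dots> = real (card (PiE K (\<lambda>_. Xn))) * (1 / ?X) *
       (\<Sum>x\<in>Xn. ?X powr (-s) * tf x powr (1 - s) * PZv powr s)"
    using Xp unfolding cE by (simp add: sum_distrib_left)
  finally show ?thesis using step1 by simp
qed



lemma fin_lists: "finite {xs::'a::finite list. length xs = n}"
  using finite_lists_length_eq[of "UNIV::'a set" n] by simp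

lemma card_lists: "card {xs::'a::finite list. length xs = n} = CARD('a) ^ n"
  using card_lists_length_eq[of "UNIV::'a set" n] by simp

lemma error_prob_nonneg:
  assumes "prob_dist PM1" "stochastic Ws" "prob_dist PXZ1" "stochastic Wc"
  shows "0 \<le> error_prob PM1 Ws PXZ1 Wc k n e d"
  using assms unfolding error_prob_def channel_prob_def prob_dist_def stochastic_def
  by (intro sum_nonneg mult_nonneg_nonneg markov_nonneg) auto

lemma Pj_nonneg:
  fixes PXZ1 :: "'x::{finite,ab_group_add} \<times> 'z::finite \<Rightarrow> real"
  assumes "prob_dist PM1" "stochastic Ws" "prob_dist PXZ1" "stochastic Wc"
  shows "0 \<le> Pj PM1 Ws PXZ1 Wc k n"
  unfolding Pj_def
proof (rule cInf_greatest)
  show "{error_prob PM1 Ws PXZ1 Wc k n e d |e d. valid_encoder k n e} \<noteq> {}"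
  proof -
    have "valid_encoder k n (\<lambda>_. replicate n (0::'x))" by (simp add: valid_encoder_def)
    thus ?thesis by blast
  qed
qed (use error_prob_nonneg[OF assms] in auto)

lemma Pj_le:
  fixes PXZ1 :: "'x::{finite,ab_group_add} \<times> 'z::finite \<Rightarrow> real"
  assumes "prob_dist PM1" "stochastic Ws" "prob_dist PXZ1" "stochastic Wc" "valid_encoder k n e"
  shows "Pj PM1 Ws PXZ1 Wc k n \<le> error_prob PM1 Ws PXZ1 Wc k n e d"
  unfolding Pj_def
  by (rule cInf_lower) (use assms error_prob_nonneg[OF assms(1-4)] in \<open>auto intro!: bdd_belowI\<close>)



lemma coding:
  fixes PM1 :: "'m::finite \<Rightarrow> real" and Ws :: "'m \<Rightarrow> 'm \<Rightarrow> real"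
    and PXZ1 :: "'x::{finite,ab_group_add} \<times> 'z::finite \<Rightarrow> real"
    and Wc :: "'x \<times> 'z \<Rightarrow> 'x \<times> 'z \<Rightarrow> real"
  assumes pm: "prob_dist PM1" and ws: "stochastic Ws" and px: "prob_dist PXZ1"
    and wc: "stochastic Wc" and A1: "assumption1 Wc" and s: "0 < s" "s < 1"
  shows "Pj PM1 Ws PXZ1 Wc k n \<le> real (card {xs::'x list. length xs = n}) powr (-s) *
     (\<Sum>ms\<in>{ms. length ms = k}. markov_prob PM1 Ws ms powr (1 - s)) *
     (\<Sum>w\<in>{w. length w = n}. markov_prob PXZ1 Wc w powr (1 - s) * markov_prob (PZ1 PXZ1) (WcZ Wc) (map snd w) powr s)"
proof -
  define K where "K = {ms::'m list. length ms = k}"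
  define Xn where "Xn = {xs::'x list. length xs = n}"
  define Ln where "Ln = {ys::('x \<times> 'z) list. length ys = n}"
  define P where "P = markov_prob PM1 Ws"
  define N where "N = markov_prob PXZ1 Wc"
  define PZ where "PZ = markov_prob (PZ1 PXZ1) (WcZ Wc)"
  define E where "E = PiE K (\<lambda>_. Xn)"
  define X where "X = real (card Xn)"
  define SP where "SP = (\<Sum>ms\<in>K. P ms powr (1 - s))"
  define SC where "SC = (\<Sum>w\<in>Ln. N w powr (1 - s) * PZ (map snd w) powr s)"
  define score where "score e m ys = P m * N (subn ys (e m))" for e :: "'m list \<Rightarrow> 'x list" and m ys
  define dec where "dec e ys = (SOME m. m \<in> K \<and> (\<forall>m'\<in>K. score e m' ys \<le> score e m ys))" for e ys
  define G where "G e = (\<Sum>m\<in>K. \<Sum>ys\<in>Ln. P m * N (subn ys (e m)) *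
      min 1 (\<Sum>m'\<in>K - {m}. (if P m * N (subn ys (e m)) \<le> P m' * N (subn ys (e m')) then 1 else 0)))" for e
  have finK: "finite K" unfolding K_def by (rule fin_lists)
  have finXn: "finite Xn" unfolding Xn_def by (rule fin_lists)
  have finLn: "finite Ln" unfolding Ln_def by (rule fin_lists)
  have "replicate k undefined \<in> K" by (simp add: K_def)
  hence neK: "K \<noteq> {}" by blast
  have "replicate n 0 \<in> Xn" by (simp add: Xn_def)
  hence neXn: "Xn \<noteq> {}" by blast
  have finE: "finite E" unfolding E_def using finK finXn by (simp add: finite_PiE)
  have neE: "E \<noteq> {}" unfolding E_def using neXn by (simp add: PiE_eq_empty_iff)
  have Xp: "X > 0" unfolding X_def using finXn neXn by (simp add: card_gt_0_iff)
  have P0: "\<And>ms. 0 \<le> P ms" unfolding P_def using pm ws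
    by (intro markov_nonneg) (auto simp: prob_dist_def stochastic_def)
  have N0: "\<And>w. 0 \<le> N w" unfolding N_def using px wc
    by (intro markov_nonneg) (auto simp: prob_dist_def stochastic_def)
  have wc0: "\<And>a b. 0 \<le> Wc a b" using wc unfolding stochastic_def by blast
  have px0: "\<And>a. 0 \<le> PXZ1 a" using px unfolding prob_dist_def by blast
  have PZ0: "\<And>w. 0 \<le> PZ w" unfolding PZ_def
    by (intro markov_nonneg) (auto simp: PZ1_def WcZ_def px0 wc0 sum_nonneg)
  have sumP: "(\<Sum>m\<in>K. P m) = 1" unfolding K_def P_def by (rule markov_sum_prob[OF pm ws])
  have sumN: "ys \<in> Ln \<Longrightarrow> (\<Sum>x'\<in>Xn. N (subn ys x')) = PZ (map snd ys)" for ys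
    unfolding Xn_def N_def PZ_def Ln_def by (rule sum_noise_x[OF A1]) simp
  have dec: "dec e ys \<in> K \<and> (\<forall>m'\<in>K. score e m' ys \<le> score e (dec e ys) ys)" for e ys
  proof -
    let ?M = "Max ((\<lambda>m. score e m ys) ` K)"
    have "?M \<in> (\<lambda>m. score e m ys) ` K" using finK neK by (intro Max_in) auto
    then obtain m0 where m0: "m0 \<in> K" "score e m0 ys = ?M" by auto
    have "\<forall>m'\<in>K. score e m' ys \<le> score e m0 ys" using m0 finK by auto
    hence "\<exists>m. m \<in> K \<and> (\<forall>m'\<in>K. score e m' ys \<le> score e m ys)" using m0 by blast
    thus ?thesis unfolding dec_def by (rule someI_ex)
  qed
  have errG: "error_prob PM1 Ws PXZ1 Wc k n e (dec e) \<le> G e" for e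
  proof -
    have "error_prob PM1 Ws PXZ1 Wc k n e (dec e) =
        (\<Sum>m\<in>K. \<Sum>ys\<in>Ln. P m * N (subn ys (e m)) * (if dec e ys = m then 0 else 1))"
      unfolding error_prob_def K_def Ln_def P_def N_def channel_prob_subn
      by (simp add: sum_distrib_left mult.assoc)
    also have "\<dots> \<le> G e" unfolding G_def
    proof (intro sum_mono mult_left_mono)
      fix m ys assume m: "m \<in> K"
      show "0 \<le> P m * N (subn ys (e m))" using P0 N0 by simp
      let ?S = "(\<Sum>m'\<in>K - {m}. (if P m * N (subn ys (e m)) \<le> P m' * N (subn ys (e m')) then 1 else 0::real))"
      have S0: "0 \<le> ?S" by (intro sum_nonneg) auto
      show "(if dec e ys = m then 0 else 1) \<le> min 1 ?S"
      proof (cases "dec e ys = m")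
        case True then show ?thesis using S0 by simp
      next
        case False
        let ?d = "dec e ys"
        have dK: "?d \<in> K - {m}" using dec[of e ys] False by auto
        have "score e m ys \<le> score e ?d ys" using dec[of e ys] m by auto
        hence "1 \<le> ?S"
          using member_le_sum[OF dK, of "\<lambda>m'. (if P m * N (subn ys (e m)) \<le> P m' * N (subn ys (e m')) then 1 else 0::real)"]
            finK unfolding score_def by auto
        then show ?thesis using False by simp
      qed
    qed
    finally show ?thesis .
  qed
  have per: "(\<Sum>e\<in>E. P m * N (subn ys (e m)) *
      min 1 (\<Sum>m'\<in>K - {m}. (if P m * N (subn ys (e m)) \<le> P m' * N (subn ys (e m')) then 1 else 0)))
     \<le> real (card E) * (1 / X) * (\<Sum>x\<in>Xn. X powr (-s) * (P m * N (subn ys x)) powr (1 - s) * PZ (map snd ys) powr s)"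
    if m: "m \<in> K" and ys: "ys \<in> Ln" for m ys
    unfolding E_def X_def
  proof (rule per_m_ys[OF finK m finXn neXn _ PZ0 s, where tf="\<lambda>x. P m * N (subn ys x)" and v="\<lambda>m' x'. P m' * N (subn ys x')"])
    show "0 \<le> P m * N (subn ys x)" for x using P0 N0 by simp
    fix x assume x: "x \<in> Xn" and tp: "P m * N (subn ys x) > 0"
    have "(\<Sum>m'\<in>K - {m}. \<Sum>x'\<in>Xn. (if P m * N (subn ys x) \<le> P m' * N (subn ys x') then 1 else 0))
        \<le> (\<Sum>m'\<in>K. \<Sum>x'\<in>Xn. P m' * N (subn ys x')) / (P m * N (subn ys x))"
      by (rule count_bound[OF finK finXn _ _ tp]) (auto simp: P0 N0)
    also have "(\<Sum>m'\<in>K. \<Sum>x'\<in>Xn. P m' * N (subn ys x')) = PZ (map snd ys)"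
      using sumP sumN[OF ys] by (simp add: sum_distrib_left[symmetric] sum_distrib_right[symmetric])
    finally show "(\<Sum>m'\<in>K - {m}. \<Sum>x'\<in>Xn. (if P m * N (subn ys x) \<le> P m' * N (subn ys x') then 1 else 0)) / real (card Xn)
        \<le> PZ (map snd ys) / (real (card Xn) * (P m * N (subn ys x)))"
      using Xp unfolding X_def by (simp add: divide_right_mono field_simps)
  qed
  have shift: "(\<Sum>ys\<in>Ln. N (subn ys x) powr (1 - s) * PZ (map snd ys) powr s) = SC" if x: "x \<in> Xn" for x
  proof -
    have "(\<Sum>ys\<in>Ln. N (subn ys x) powr (1 - s) * PZ (map snd ys) powr s)
        = (\<Sum>ys\<in>Ln. N (subn ys x) powr (1 - s) * PZ (map snd (subn ys x)) powr s)"
      using x by (intro sum.cong) (auto simp: Ln_def Xn_def snd_subn)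
    also have "\<dots> = SC" unfolding SC_def Ln_def
      by (rule sum_shift_ys[where f="\<lambda>w. N w powr (1 - s) * PZ (map snd w) powr s"]) (use x Xn_def in simp)
    finally show ?thesis .
  qed
  have "(\<Sum>e\<in>E. G e) = (\<Sum>m\<in>K. \<Sum>ys\<in>Ln. \<Sum>e\<in>E. P m * N (subn ys (e m)) *
      min 1 (\<Sum>m'\<in>K - {m}. (if P m * N (subn ys (e m)) \<le> P m' * N (subn ys (e m')) then 1 else 0)))"
    unfolding G_def by (simp add: sum.swap[of _ E])
  also have "\<dots> \<le> (\<Sum>m\<in>K. \<Sum>ys\<in>Ln. real (card E) * (1 / X) *
      (\<Sum>x\<in>Xn. X powr (-s) * (P m * N (subn ys x)) powr (1 - s) * PZ (map snd ys) powr s))"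
    by (intro sum_mono per)
  also have "\<dots> = real (card E) * (1 / X) * X powr (-s) *
      (\<Sum>m\<in>K. P m powr (1 - s) * (\<Sum>x\<in>Xn. \<Sum>ys\<in>Ln. N (subn ys x) powr (1 - s) * PZ (map snd ys) powr s))"
    using P0 N0 by (simp add: powr_mult sum_distrib_left sum.swap[of _ Ln] mult_ac)
  also have "\<dots> = real (card E) * (1 / X) * X powr (-s) * (\<Sum>m\<in>K. P m powr (1 - s) * (X * SC))"
    using shift by (simp add: X_def)
  also have "\<dots> = real (card E) * (X powr (-s) * SP * SC)"
    using Xp by (simp add: SP_def sum_distrib_right[symmetric])
  finally have avg: "(\<Sum>e\<in>E. G e) \<le> real (card E) * (X powr (-s) * SP * SC)" .
  obtain e where e: "e \<in> E" "G e \<le> X powr (-s) * SP * SC"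
    using exists_le_avg[OF finE neE avg] by blast
  have ve: "valid_encoder k n e" using e(1) unfolding E_def K_def Xn_def valid_encoder_def by auto
  have "Pj PM1 Ws PXZ1 Wc k n \<le> error_prob PM1 Ws PXZ1 Wc k n e (dec e)"
    by (rule Pj_le[OF pm ws px wc ve])
  also have "\<dots> \<le> X powr (-s) * SP * SC" using errG[of e] e(2) by simp
  finally show ?thesis unfolding X_def SP_def SC_def Xn_def K_def P_def Ln_def N_def PZ_def .
qed



lemma Pj_bound:
  fixes PM1 :: "'m::finite \<Rightarrow> real" and Ws :: "'m \<Rightarrow> 'm \<Rightarrow> real"
    and PXZ1 :: "'x::{finite,ab_group_add} \<times> 'z::finite \<Rightarrow> real"
    and Wc :: "'x \<times> 'z \<Rightarrow> 'x \<times> 'z \<Rightarrow> real"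
  assumes pm: "prob_dist PM1" and ws: "stochastic Ws" and px: "prob_dist PXZ1"
    and wc: "stochastic Wc" and A1: "assumption1 Wc" and s: "0 < s" "s < 1"
  shows "\<exists>D1 D2. D1 > 0 \<and> D2 > 0 \<and> (\<forall>k n. Pj PM1 Ws PXZ1 Wc k n \<le>
     real CARD('x) powr (- s * real n) *
     (D1 * (real k + 1) ^ CARD('m) * tpf (\<lambda>a b. Ws a b powr (1 - s)) ^ k) *
     (D2 * (real n + 1) ^ CARD('x \<times> 'z) * tpf (Bmat Wc s) ^ n))"
proof -
  let ?A1 = "\<lambda>a b. Ws a b powr (1 - s)"
  let ?Q1 = "\<lambda>a. PM1 a powr (1 - s)"
  let ?Q2 = "\<lambda>a. PXZ1 a powr (1 - s) * PZ1 PXZ1 (snd a) powr s"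
  obtain D1' where D1': "\<And>k. (\<Sum>xs\<in>{xs. length xs = k}. markov_prob ?Q1 ?A1 xs) \<le> D1' * (real k + 1) ^ CARD('m) * tpf ?A1 ^ k"
    using markov_sum_bound[of ?Q1 ?A1] by blast
  obtain D2' where D2': "\<And>k. (\<Sum>xs\<in>{xs. length xs = k}. markov_prob ?Q2 (Bmat Wc s) xs) \<le> D2' * (real k + 1) ^ CARD('x \<times> 'z) * tpf (Bmat Wc s) ^ k"
    using markov_sum_bound[of ?Q2 "Bmat Wc s"] by blast
  define D1 where "D1 = max D1' 1"
  define D2 where "D2 = max D2' 1"
  have wc0: "\<And>a b. 0 \<le> Wc a b" using wc unfolding stochastic_def by blast
  have ws0: "\<And>a b. 0 \<le> Ws a b" using ws unfolding stochastic_def by blast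
  have px0: "\<And>a. 0 \<le> PXZ1 a" using px unfolding prob_dist_def by blast
  have pm0: "\<And>a. 0 \<le> PM1 a" using pm unfolding prob_dist_def by blast
  have t1: "tpf ?A1 > 0" "tpf (Bmat Wc s) > 0" by (rule tpf_pos)+
  show ?thesis
  proof (intro exI conjI allI)
    show "D1 > 0" "D2 > 0" by (simp_all add: D1_def D2_def)
    fix k n
    let ?SP = "\<Sum>ms\<in>{ms. length ms = k}. markov_prob PM1 Ws ms powr (1 - s)"
    let ?SC = "\<Sum>w\<in>{w. length w = n}. markov_prob PXZ1 Wc w powr (1 - s) * markov_prob (PZ1 PXZ1) (WcZ Wc) (map snd w) powr s"
    have SP: "?SP \<le> D1 * (real k + 1) ^ CARD('m) * tpf ?A1 ^ k"
    proof -
      have "?SP = (\<Sum>xs\<in>{xs. length xs = k}. markov_prob ?Q1 ?A1 xs)"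
        using markov_powr[of PM1 Ws, OF pm0 ws0] by simp
      also have "\<dots> \<le> D1' * (real k + 1) ^ CARD('m) * tpf ?A1 ^ k" by (rule D1')
      also have "\<dots> \<le> D1 * (real k + 1) ^ CARD('m) * tpf ?A1 ^ k"
        using t1 by (intro mult_right_mono) (auto simp: D1_def)
      finally show ?thesis .
    qed
    have SC: "?SC \<le> D2 * (real n + 1) ^ CARD('x \<times> 'z) * tpf (Bmat Wc s) ^ n"
    proof -
      have "?SC = (\<Sum>xs\<in>{xs. length xs = n}. markov_prob ?Q2 (Bmat Wc s) xs)"
        using markov_prod_powr[where Wc=Wc and P=PXZ1, OF wc0 px0] by simp
      also have "\<dots> \<le> D2' * (real n + 1) ^ CARD('x \<times> 'z) * tpf (Bmat Wc s) ^ n" by (rule D2')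
      also have "\<dots> \<le> D2 * (real n + 1) ^ CARD('x \<times> 'z) * tpf (Bmat Wc s) ^ n"
        using t1 by (intro mult_right_mono) (auto simp: D2_def)
      finally show ?thesis .
    qed
    have SP0: "0 \<le> ?SP" by (intro sum_nonneg) simp
    have SC0: "0 \<le> ?SC" by (intro sum_nonneg) simp
    have X: "real (card {xs::'x list. length xs = n}) powr (-s) = real CARD('x) powr (- s * real n)"
      by (simp add: card_lists powr_realpow[symmetric] powr_powr mult.commute)
    have "Pj PM1 Ws PXZ1 Wc k n \<le> real (card {xs::'x list. length xs = n}) powr (-s) * ?SP * ?SC"
      by (rule coding[OF pm ws px wc A1 s])
    also have "\<dots> \<le> real CARD('x) powr (- s * real n) *
     (D1 * (real k + 1) ^ CARD('m) * tpf ?A1 ^ k) * (D2 * (real n + 1) ^ CARD('x \<times> 'z) * tpf (Bmat Wc s) ^ n)"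
      unfolding X using SP SC SP0 SC0
      by (intro mult_mono) (auto intro!: mult_nonneg_nonneg)
    finally show "Pj PM1 Ws PXZ1 Wc k n \<le> real CARD('x) powr (- s * real n) *
     (D1 * (real k + 1) ^ CARD('m) * tpf ?A1 ^ k) * (D2 * (real n + 1) ^ CARD('x \<times> 'z) * tpf (Bmat Wc s) ^ n)" .
  qed
qed



lemma lim_k_over_n:
  assumes r: "r > 0"
  shows "(\<lambda>n. real (nat \<lfloor>r * real n\<rfloor>) / real n) \<longlonglongrightarrow> r"
proof (rule tendsto_sandwich[of "\<lambda>n. r - 1 / real n" _ _ "\<lambda>n. r"])
  have "\<forall>n>0. r - 1 / real n \<le> real (nat \<lfloor>r * real n\<rfloor>) / real n"
  proof (intro allI impI)
    fix n :: nat assume n: "n > 0"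
    have "r * real n - 1 \<le> real (nat \<lfloor>r * real n\<rfloor>)"
      using r by (simp add: of_nat_nat)
    have "r - 1 / real n = (r * real n - 1) / real n" using n by (simp add: field_simps)
    also have "\<dots> \<le> real (nat \<lfloor>r * real n\<rfloor>) / real n"
      using \<open>r * real n - 1 \<le> real (nat \<lfloor>r * real n\<rfloor>)\<close> by (intro divide_right_mono) auto
    finally show "r - 1 / real n \<le> real (nat \<lfloor>r * real n\<rfloor>) / real n" .
  qed
  thus "\<forall>\<^sub>F n in sequentially. r - 1 / real n \<le> real (nat \<lfloor>r * real n\<rfloor>) / real n"
    by (simp add: eventually_sequentially) (metis Suc_le_eq)
  have "\<forall>n>0. real (nat \<lfloor>r * real n\<rfloor>) / real n \<le> r"
  proof (intro allI impI)
    fix n :: nat assume n: "n > 0"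
    have "real (nat \<lfloor>r * real n\<rfloor>) \<le> r * real n"
      using r by (simp add: of_nat_nat)
    thus "real (nat \<lfloor>r * real n\<rfloor>) / real n \<le> r"
      using n by (simp add: field_simps)
  qed
  thus "\<forall>\<^sub>F n in sequentially. real (nat \<lfloor>r * real n\<rfloor>) / real n \<le> r"
    by (simp add: eventually_sequentially) (metis Suc_le_eq)
  show "(\<lambda>n. r - 1 / real n) \<longlonglongrightarrow> r" by real_asymp
  show "(\<lambda>n. r) \<longlonglongrightarrow> r" by simp
qed

lemma lim_lnk_over_n:
  assumes r: "r > 0"
  shows "(\<lambda>n. ln (real (nat \<lfloor>r * real n\<rfloor>) + 1) / real n) \<longlonglongrightarrow> 0"
proof (rule tendsto_sandwich[of "\<lambda>n. 0" _ _ "\<lambda>n. (ln (r + 1) + ln (real n + 1)) / real n"])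
  show "\<forall>\<^sub>F n in sequentially. 0 \<le> ln (real (nat \<lfloor>r * real n\<rfloor>) + 1) / real n"
    by (intro always_eventually allI divide_nonneg_nonneg) auto
  have "ln (real (nat \<lfloor>r * real n\<rfloor>) + 1) / real n \<le> (ln (r + 1) + ln (real n + 1)) / real n" for n
  proof -
    have "real (nat \<lfloor>r * real n\<rfloor>) \<le> r * real n" using r by (simp add: of_nat_nat)
    moreover have "(r + 1) * (real n + 1) = r * real n + 1 + (r + real n)" by (simp add: algebra_simps)
    ultimately have "real (nat \<lfloor>r * real n\<rfloor>) + 1 \<le> (r + 1) * (real n + 1)" using r
      by (smt (verit) of_nat_0_le_iff)
    hence "ln (real (nat \<lfloor>r * real n\<rfloor>) + 1) \<le> ln ((r + 1) * (real n + 1))" by simp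
    also have "\<dots> = ln (r + 1) + ln (real n + 1)" using r by (simp add: ln_mult)
    finally show ?thesis by (simp add: divide_right_mono)
  qed
  thus "\<forall>\<^sub>F n in sequentially. ln (real (nat \<lfloor>r * real n\<rfloor>) + 1) / real n \<le> (ln (r + 1) + ln (real n + 1)) / real n"
    by (intro always_eventually allI)
  have "(\<lambda>n. ln (r + 1) * (1 / real n) + ln (real n + 1) / real n) \<longlonglongrightarrow> ln (r + 1) * 0 + 0"
    by (intro tendsto_intros) real_asymp+
  thus "(\<lambda>n. (ln (r + 1) + ln (real n + 1)) / real n) \<longlonglongrightarrow> 0"
    by (simp add: add_divide_distrib)
qed simp



lemma asym:
  fixes p :: "nat \<Rightarrow> real" and R D1 D2 t1 t2 r s :: real and a b :: nat
  assumes R: "R > 0" and D: "D1 > 0" "D2 > 0" and t: "t1 > 0" "t2 > 0" and r: "r > 0"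
    and p0: "\<And>n. 0 \<le> p n"
    and pb: "\<And>n. p n \<le> R powr (- s * real n) *
        (D1 * (real (nat \<lfloor>r * real n\<rfloor>) + 1) ^ a * t1 ^ (nat \<lfloor>r * real n\<rfloor>)) *
        (D2 * (real n + 1) ^ b * t2 ^ n)"
  shows "ereal (s * ln R - (r * ln t1 + ln t2)) \<le> liminf (\<lambda>n. neg_log_rate (p n) n)"
proof -
  define k where "k n = nat \<lfloor>r * real n\<rfloor>" for n
  define F where "F n = R powr (- s * real n) * (D1 * (real (k n) + 1) ^ a * t1 ^ (k n)) *
        (D2 * (real n + 1) ^ b * t2 ^ n)" for n
  define h where "h n = (ln D1 + ln D2) / real n + real a * (ln (real (k n) + 1) / real n)
      + (real (k n) / real n) * ln t1 + real b * (ln (real n + 1) / real n) + ln t2" for n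
  define L where "L = s * ln R - (r * ln t1 + ln t2)"
  have Fp: "F n > 0" for n using R D t by (simp add: F_def)
  have lnF: "ln (F n) = - s * real n * ln R + (ln D1 + real a * ln (real (k n) + 1) + real (k n) * ln t1)
      + (ln D2 + real b * ln (real n + 1) + real n * ln t2)" for n
    using R D t by (simp add: F_def ln_mult ln_powr ln_realpow)
  have eqh: "- ln (F n) / real n = s * ln R - h n" if n: "n > 0" for n
    using n unfolding lnF h_def by (simp add: field_simps)
  have hlim: "h \<longlonglongrightarrow> (ln D1 + ln D2) * 0 + real a * 0 + r * ln t1 + real b * 0 + ln t2"
    unfolding h_def k_def divide_inverse[of "ln D1 + ln D2"]
    by (intro tendsto_intros lim_k_over_n[OF r] lim_lnk_over_n[OF r]) real_asymp+
  hence hlim': "h \<longlonglongrightarrow> r * ln t1 + ln t2" by simp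
  show ?thesis
    unfolding L_def[symmetric]
  proof (subst le_Liminf_iff, intro allI impI)
    fix y assume y: "y < ereal L"
    obtain z where z: "y < ereal z" "ereal z < ereal L" using ereal_dense2[OF y] by blast
    have ev1: "\<forall>\<^sub>F n in sequentially. h n < r * ln t1 + ln t2 + (L - z)"
      using order_tendstoD(2)[OF hlim', of "r * ln t1 + ln t2 + (L - z)"] z by simp
    have ev2: "\<forall>\<^sub>F n in sequentially. n > 0" by (simp add: eventually_gt_at_top)
    show "\<forall>\<^sub>F n in sequentially. y < neg_log_rate (p n) n"
      using ev1 ev2
    proof eventually_elim
      case (elim n)
      show ?case
      proof (cases "p n = 0")
        case True then show ?thesis using z(1) by (cases y) (auto simp: neg_log_rate_def)
      next
        case False
        hence pp: "p n > 0" using p0[of n] by simp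
        have "ln (p n) \<le> ln (F n)" using pp Fp pb[of n] by (simp add: F_def k_def)
        hence "- ln (F n) / real n \<le> - ln (p n) / real n" using elim by (simp add: divide_right_mono)
        moreover have "z < - ln (F n) / real n" using eqh[of n] elim L_def by simp
        ultimately have "z < - ln (p n) / real n" by linarith
        hence "ereal z < ereal (- ln (p n) / real n)" by simp
        hence "y < ereal (- ln (p n) / real n)" using z(1) by (rule order.strict_trans[rotated])
        thus ?thesis using False by (simp add: neg_log_rate_def)
      qed
    qed
  qed
qed


theorem mainTheorem12:
  fixes PM1 :: "'m::finite \<Rightarrow> real"
    and Ws :: "'m \<Rightarrow> 'm \<Rightarrow> real"
    and PXZ1 :: "'x::{finite,ab_group_add} \<times> 'z::finite \<Rightarrow> real"
    and Wc :: "'x \<times> 'z \<Rightarrow> 'x \<times> 'z \<Rightarrow> real"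
    and r :: real
  assumes "prob_dist PM1"
    and "stochastic Ws" and "irreducible_chain Ws" and "aperiodic_chain Ws"
    and "prob_dist PXZ1"
    and "stochastic Wc" and "irreducible_chain Wc" and "aperiodic_chain Wc"
    and "assumption1 Wc"
    and "r > 0"
    and "r * H_src Ws + H_ch Wc < ln (real CARD('x))"
  shows "liminf (\<lambda>n. neg_log_rate (Pj PM1 Ws PXZ1 Wc (nat \<lfloor>r * real n\<rfloor>) n) n)
           \<ge> (SUP s\<in>{0<..<1::real}. ereal (s * ln (real CARD('x)) - U_fun Ws Wc r s))"
proof (rule SUP_least)
  fix s :: real assume "s \<in> {0<..<1}"
  hence s: "0 < s" "s < 1" by auto
  note pm = assms(1) and ws = assms(2) and px = assms(5) and wc = assms(6) and A1 = assms(9) and r = assms(10)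
  obtain D1 D2 where D: "D1 > 0" "D2 > 0" and bnd: "\<And>k n. Pj PM1 Ws PXZ1 Wc k n \<le>
     real CARD('x) powr (- s * real n) *
     (D1 * (real k + 1) ^ CARD('m) * tpf (\<lambda>a b. Ws a b powr (1 - s)) ^ k) *
     (D2 * (real n + 1) ^ CARD('x \<times> 'z) * tpf (Bmat Wc s) ^ n)"
    using Pj_bound[OF pm ws px wc A1 s] by blast
  have U: "U_fun Ws Wc r s = r * ln (tpf (\<lambda>a b. Ws a b powr (1 - s))) + ln (tpf (Bmat Wc s))"
    unfolding U_fun_def theta_H_src_def theta_H_ch_def ln_tpf Bmat_def by simp
  have "ereal (s * ln (real CARD('x)) - (r * ln (tpf (\<lambda>a b. Ws a b powr (1 - s))) + ln (tpf (Bmat Wc s))))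
      \<le> liminf (\<lambda>n. neg_log_rate (Pj PM1 Ws PXZ1 Wc (nat \<lfloor>r * real n\<rfloor>) n) n)"
    by (rule asym[OF _ D tpf_pos tpf_pos r Pj_nonneg[OF pm ws px wc] bnd]) simp
  thus "ereal (s * ln (real CARD('x)) - U_fun Ws Wc r s)
      \<le> liminf (\<lambda>n. neg_log_rate (Pj PM1 Ws PXZ1 Wc (nat \<lfloor>r * real n\<rfloor>) n) n)"
    unfolding U .
qed

end
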